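(* Let $(V,u_r)$ be a strongly adapted homogeneous feedback pair (sAHFP) for the pure chain of integrators of order $r$, with parameters $\kappa$, $\gamma_r$. Then there exist constants $C_0,C_1>0$ such that for every $\eta>0$ and every $z\in\mathbb{R}^r$, $$|\partial_rV(z)|\le C_0\,\eta^{1+\frac\kappa2}+C_1\frac{|u_r(z)\partial_rV(z)|}{\eta^{\gamma_r(1+\frac\kappa2)}}.$$
   Context: Fix an integer $r\ge2$. Let $e_1,\dots,e_r$ be the canonical basis of $\mathbb{R}^r$ and $J_r$ the $r\times r$ matrix with $J_re_1=0$ and $J_re_i=e_{i-1}$ for $2\le i\le r$. For $a>0$, $\lfloor x\rceil^a:=|x|^a\,\mathrm{sgn}(x)$. $\partial_jV$ is the partial derivative of $V$ in $z_j$. Weights and dilations: given $\kappa\in(-1,0)$ and $p\in(0,2)$, set $p_i=p+(i-1)\kappa$ for $1\le i\le r+1$, and $\delta_\lambda(z)=(\lambda^{p_1}z_1,\dots,\lambda^{p_r}z_r)$ for $\lambda>0$. A function $f$ is homogeneous of degree $q$ if $f(\delta_\lambda(z))=\lambda^qf(z)$ for all $\lambda>0,z$. AHFP: a pair $(V,u_r)$ with $V:\mathbb{R}^r\to[0,\infty)$, $u_r:\mathbb{R}^r\to\mathbb{R}$ is an adapted homogeneous feedback pair if there exist $\kappa\in(-1,0)$, $p\in(0,2)$ with $p_{r+1}>0$ such that: $u_r$ is continuous, $u_r(0)=0$, homogeneous of degree $p_{r+1}$; $V$ is $C^1$, positive definite and homogeneous of degree $2$; there exist a continuous $\rho$ and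 constants $0<c_r\le d_r$ with $c_r\le\rho\le d_r$ and $\langle\nabla V(z),J_rz+u_r(z)e_r\rangle=-\rho(z)V(z)^{1+\frac\kappa2}$ for all $z$; and $u_r(z)\partial_rV(z)\le0$ for all $z$. It is strongly adapted (sAHFP) if moreover $u_r(z)=-l_r\lfloor\partial_rV(z)\rceil^{\gamma_r}$ for some constants $l_r>0$, $\gamma_r>0$. *)

theory Defs
  imports "HOL-Analysis.Analysis"
begin

text \<open>State space R^r is rendered as real^('n::{finite,linorder}) with a linearly ordered finite index type;
  the k-th element of 'n (1-based) corresponds to the coordinate z_k, and r = CARD('n).\<close>

definition idx :: "'n::{finite,linorder} \<Rightarrow> nat" where
  "idx i = card {j. j < i} + 1"

definition lastidx :: "'n::{finite,linorder}" where
  "lastidx = Max UNIV"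

text \<open>The shift matrix J_r: J e_1 = 0, J e_i = e_(i-1); hence (J z)_k = z_(k+1), (J z)_r = 0.\<close>
definition Jshift :: "real^('n::{finite,linorder}) \<Rightarrow> real^('n::{finite,linorder})" where
  "Jshift z = (\<chi> k. (\<Sum>j\<in>{j. idx j = idx k + 1}. z $ j))"

definition sgnpow :: "real \<Rightarrow> real \<Rightarrow> real" where
  "sgnpow x a = \<bar>x\<bar> powr a * sgn x"

definition partial :: "(real^('n::{finite,linorder}) \<Rightarrow> real) \<Rightarrow> 'n \<Rightarrow> real^('n::{finite,linorder}) \<Rightarrow> real" where
  "partial V j z = frechet_derivative V (at z) (axis j 1)"

definition weight :: "real \<Rightarrow> real \<Rightarrow> nat \<Rightarrow> real" where
  "weight \<kappa> p i = p + (real i - 1) * \<kappa>"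

definition dil :: "real \<Rightarrow> real \<Rightarrow> real \<Rightarrow> real^('n::{finite,linorder}) \<Rightarrow> real^('n::{finite,linorder})" where
  "dil \<kappa> p lam z = (\<chi> i. lam powr (weight \<kappa> p (idx i)) * z $ i)"

definition homog :: "real \<Rightarrow> real \<Rightarrow> (real^('n::{finite,linorder}) \<Rightarrow> real) \<Rightarrow> real \<Rightarrow> bool" where
  "homog \<kappa> p f q \<longleftrightarrow> (\<forall>lam>0. \<forall>z. f (dil \<kappa> p lam z) = lam powr q * f z)"

definition C1 :: "(real^('n::{finite,linorder}) \<Rightarrow> real) \<Rightarrow> bool" where
  "C1 V \<longleftrightarrow> (\<forall>z. V differentiable (at z)) \<and> (\<forall>j. continuous_on UNIV (partial V j))"

definition AHFP_params :: "real \<Rightarrow> real \<Rightarrow> (real^('n::{finite,linorder}) \<Rightarrow> real) \<Rightarrow> (real^('n::{finite,linorder}) \<Rightarrow> real) \<Rightarrow> bool" where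
  "AHFP_params \<kappa> p V u \<longleftrightarrow>
     -1 < \<kappa> \<and> \<kappa> < 0 \<and> 0 < p \<and> p < 2 \<and> weight \<kappa> p (CARD('n) + 1) > 0 \<and>
     continuous_on UNIV u \<and> u 0 = 0 \<and> homog \<kappa> p u (weight \<kappa> p (CARD('n) + 1)) \<and>
     (\<forall>z. V z \<ge> 0) \<and> C1 V \<and> V 0 = 0 \<and> (\<forall>z. z \<noteq> 0 \<longrightarrow> V z > 0) \<and> homog \<kappa> p V 2 \<and>
     (\<exists>\<rho> c d. continuous_on UNIV \<rho> \<and> 0 < c \<and> c \<le> d \<and> (\<forall>z. c \<le> \<rho> z \<and> \<rho> z \<le> d) \<and>
        (\<forall>z. frechet_derivative V (at z) (Jshift z + u z *\<^sub>R axis lastidx 1)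
               = - \<rho> z * V z powr (1 + \<kappa> / 2))) \<and>
     (\<forall>z. u z * partial V lastidx z \<le> 0)"

definition AHFP :: "(real^('n::{finite,linorder}) \<Rightarrow> real) \<Rightarrow> (real^('n::{finite,linorder}) \<Rightarrow> real) \<Rightarrow> bool" where
  "AHFP V u \<longleftrightarrow> (\<exists>\<kappa> p. AHFP_params \<kappa> p V u)"

definition sAHFP_params :: "real \<Rightarrow> real \<Rightarrow> real \<Rightarrow> real \<Rightarrow> (real^('n::{finite,linorder}) \<Rightarrow> real) \<Rightarrow> (real^('n::{finite,linorder}) \<Rightarrow> real) \<Rightarrow> bool" where
  "sAHFP_params \<kappa> p l \<gamma> V u \<longleftrightarrow> AHFP_params \<kappa> p V u \<and> l > 0 \<and> \<gamma> > 0 \<and>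
     (\<forall>z. u z = - l * sgnpow (partial V lastidx z) \<gamma>)"

end

theory Submission
  imports Defs
begin

lemma scalar_ineq:
  fixes x e l g :: real
  assumes "x \<ge> 0" "e > 0" "l > 0" "g > 0"
  shows "x \<le> 1 * e + (1/l) * (l * x powr g * x) / e powr g"
proof (cases "x \<le> e")
  case True
  have "0 \<le> (1/l) * (l * x powr g * x) / e powr g" using assms by simp
  then show ?thesis using True by simp
next
  case False
  then have "e powr g \<le> x powr g" using assms by (intro powr_mono2) auto
  moreover have "e powr g > 0" using assms by simp
  ultimately have "1 \<le> x powr g / e powr g" by simp
  then have "x \<le> x * (x powr g / e powr g)" using assms
    by (metis mult.right_neutral mult_left_mono)
  also have "\<dots> = (1/l) * (l * x powr g * x) / e powr g" using assms by (simp add: field_simps)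
  finally show ?thesis using assms by simp
qed

theorem lemma2:
  fixes V u :: "real^'n::{finite,linorder} \<Rightarrow> real" and \<kappa> p l \<gamma> :: real
  assumes "CARD('n) \<ge> 2"
    and "sAHFP_params \<kappa> p l \<gamma> V u"
  shows "\<exists>C0>0. \<exists>C1>0. \<forall>\<eta>>0. \<forall>z.
           \<bar>partial V lastidx z\<bar>
             \<le> C0 * \<eta> powr (1 + \<kappa> / 2)
                + C1 * \<bar>u z * partial V lastidx z\<bar> / \<eta> powr (\<gamma> * (1 + \<kappa> / 2))"
proof -
  have l: "l > 0" and g: "\<gamma> > 0" and u: "\<And>z. u z = - l * sgnpow (partial V lastidx z) \<gamma>"
    using assms(2) unfolding sAHFP_params_def by auto
  show ?thesis
  proof (rule exI[of _ 1], rule conjI, simp, rule exI[of _ "1/l"], rule conjI)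
    show "0 < 1/l" using l by simp
  next
    show "\<forall>\<eta>>0. \<forall>z. \<bar>partial V lastidx z\<bar> \<le> 1 * \<eta> powr (1 + \<kappa> / 2)
                + 1/l * \<bar>u z * partial V lastidx z\<bar> / \<eta> powr (\<gamma> * (1 + \<kappa> / 2))"
    proof (intro allI impI)
    fix \<eta> :: real and z
    assume eta: "\<eta> > 0"
    define P where "P = partial V lastidx z"
    have abs_eq: "\<bar>u z * P\<bar> = l * \<bar>P\<bar> powr \<gamma> * \<bar>P\<bar>"
      using l unfolding u P_def[symmetric] sgnpow_def
      by (cases "P > 0"; cases "P = 0") (auto simp: abs_mult sgn_if)
    have pw: "\<eta> powr (\<gamma> * (1 + \<kappa> / 2)) = (\<eta> powr (1 + \<kappa> / 2)) powr \<gamma>"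
      using eta by (simp add: powr_powr mult.commute)
    show "\<bar>partial V lastidx z\<bar> \<le> 1 * \<eta> powr (1 + \<kappa> / 2)
                + 1/l * \<bar>u z * partial V lastidx z\<bar> / \<eta> powr (\<gamma> * (1 + \<kappa> / 2))"
      unfolding P_def[symmetric] abs_eq pw
      using scalar_ineq[of "\<bar>P\<bar>" "\<eta> powr (1 + \<kappa> / 2)" l \<gamma>] eta l g by simp
  qed
  qed
qed

end
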